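(* Let $G$ be a $K_4$-minor-free graph and $X$ a set of three vertices of $G$. If there is a proper $3$-coloring $\phi$ of $G$ with $|\phi(X)|=2$, then $X$ is feasible.
   Context: For $n\in\mathbb{N}$, the chain of diamonds $D_n$ is the graph with vertex set $\{u_i,v_i,w_i:i\in[n]\}\cup\{u_0\}$ and edge set $\{u_{i-1}v_i,u_{i-1}w_i,v_iw_i,v_iu_i,w_iu_i: i\in[n]\}$; let $U(D_n)=\{u_0,\dots,u_n\}$. A set $X$ of distinct vertices of $G$ is connected by a chain of diamonds if there exist $n\in\mathbb{N}$ and a graph homomorphism $\varphi:D_n\to G$ with $X\subseteq\varphi(U(D_n))$. A set $X$ of three distinct vertices of $G$ is feasible if $X$ is not connected by a chain of diamonds and there is a proper $3$-coloring $\phi$ of $G$ with $|\phi(X)|\le 2$. *)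

theory Defs
  imports Main
begin

definition graph :: "'a set \<Rightarrow> ('a \<Rightarrow> 'a \<Rightarrow> bool) \<Rightarrow> bool" where
  "graph V E \<longleftrightarrow> finite V \<and> (\<forall>x y. E x y \<longrightarrow> x \<in> V \<and> y \<in> V)
     \<and> (\<forall>x y. E x y \<longrightarrow> E y x) \<and> (\<forall>x. \<not> E x x)"

definition connected_set :: "('a \<Rightarrow> 'a \<Rightarrow> bool) \<Rightarrow> 'a set \<Rightarrow> bool" where
  "connected_set E S \<longleftrightarrow>
     (\<forall>x\<in>S. \<forall>y\<in>S. (\<lambda>a b. E a b \<and> a \<in> S \<and> b \<in> S)\<^sup>*\<^sup>* x y)"

definition has_K4_minor :: "'a set \<Rightarrow> ('a \<Rightarrow> 'a \<Rightarrow> bool) \<Rightarrow> bool" where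
  "has_K4_minor V E \<longleftrightarrow> (\<exists>B :: nat \<Rightarrow> 'a set.
     (\<forall>i<4. B i \<noteq> {} \<and> B i \<subseteq> V \<and> connected_set E (B i)) \<and>
     (\<forall>i<4. \<forall>j<4. i \<noteq> j \<longrightarrow> B i \<inter> B j = {} \<and> (\<exists>x\<in>B i. \<exists>y\<in>B j. E x y)))"

definition K4_minor_free :: "'a set \<Rightarrow> ('a \<Rightarrow> 'a \<Rightarrow> bool) \<Rightarrow> bool" where
  "K4_minor_free V E \<longleftrightarrow> \<not> has_K4_minor V E"

definition proper_3_coloring :: "'a set \<Rightarrow> ('a \<Rightarrow> 'a \<Rightarrow> bool) \<Rightarrow> ('a \<Rightarrow> nat) \<Rightarrow> bool" where
  "proper_3_coloring V E \<phi> \<longleftrightarrow> (\<forall>x\<in>V. \<phi> x < 3) \<and> (\<forall>x y. E x y \<longrightarrow> \<phi> x \<noteq> \<phi> y)"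

text \<open>A homomorphism from the chain of diamonds D_n into G, given by the images
  u i (i = 0..n), v i, w i (i = 1..n).\<close>
definition diamond_chain_hom ::
  "'a set \<Rightarrow> ('a \<Rightarrow> 'a \<Rightarrow> bool) \<Rightarrow> nat \<Rightarrow> (nat \<Rightarrow> 'a) \<Rightarrow> (nat \<Rightarrow> 'a) \<Rightarrow> (nat \<Rightarrow> 'a) \<Rightarrow> bool" where
  "diamond_chain_hom V E n u v w \<longleftrightarrow>
     (\<forall>i\<in>{0..n}. u i \<in> V) \<and> (\<forall>i\<in>{1..n}. v i \<in> V \<and> w i \<in> V) \<and>
     (\<forall>i\<in>{1..n}. E (u (i - 1)) (v i) \<and> E (u (i - 1)) (w i) \<and> E (v i) (w i)
                  \<and> E (v i) (u i) \<and> E (w i) (u i))"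

definition connected_by_chain_of_diamonds ::
  "'a set \<Rightarrow> ('a \<Rightarrow> 'a \<Rightarrow> bool) \<Rightarrow> 'a set \<Rightarrow> bool" where
  "connected_by_chain_of_diamonds V E X \<longleftrightarrow>
     (\<exists>n u v w. diamond_chain_hom V E n u v w \<and> X \<subseteq> u ` {0..n})"

definition feasible :: "'a set \<Rightarrow> ('a \<Rightarrow> 'a \<Rightarrow> bool) \<Rightarrow> 'a set \<Rightarrow> bool" where
  "feasible V E X \<longleftrightarrow> X \<subseteq> V \<and> card X = 3 \<and>
     \<not> connected_by_chain_of_diamonds V E X \<and>
     (\<exists>\<phi>. proper_3_coloring V E \<phi> \<and> card (\<phi> ` X) \<le> 2)"

end

theory Submission
  imports Defs
begin

lemma chain_same_color:
  assumes h: "diamond_chain_hom V E n u v w" and c: "proper_3_coloring V E \<phi>"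
  shows "i \<le> n \<Longrightarrow> \<phi> (u i) = \<phi> (u 0)"
proof (induction i)
  case 0 then show ?case by simp
next
  case (Suc i)
  have i1: "Suc i \<in> {1..n}" using Suc.prems by simp
  have e: "E (u i) (v (Suc i))" "E (u i) (w (Suc i))" "E (v (Suc i)) (w (Suc i))"
    "E (v (Suc i)) (u (Suc i))" "E (w (Suc i)) (u (Suc i))"
    using h i1 unfolding diamond_chain_hom_def by (metis diff_Suc_1)+
  have vs: "u i \<in> V" "u (Suc i) \<in> V" "v (Suc i) \<in> V" "w (Suc i) \<in> V"
    using h i1 Suc.prems unfolding diamond_chain_hom_def by auto
  have lt: "\<phi> (u i) < 3" "\<phi> (u (Suc i)) < 3" "\<phi> (v (Suc i)) < 3" "\<phi> (w (Suc i)) < 3"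
    using c vs unfolding proper_3_coloring_def by auto
  have ne: "\<phi> (u i) \<noteq> \<phi> (v (Suc i))" "\<phi> (u i) \<noteq> \<phi> (w (Suc i))"
    "\<phi> (v (Suc i)) \<noteq> \<phi> (w (Suc i))" "\<phi> (v (Suc i)) \<noteq> \<phi> (u (Suc i))"
    "\<phi> (w (Suc i)) \<noteq> \<phi> (u (Suc i))"
    using c e unfolding proper_3_coloring_def by blast+
  have "\<phi> (u (Suc i)) = \<phi> (u i)" using lt ne by linarith
  then show ?case using Suc by simp
qed

theorem mainTheorem8:
  fixes V :: "'a set" and E :: "'a \<Rightarrow> 'a \<Rightarrow> bool" and X :: "'a set"
  assumes "graph V E"
    and "K4_minor_free V E"
    and "X \<subseteq> V" and "card X = 3"
    and "\<exists>\<phi>. proper_3_coloring V E \<phi> \<and> card (\<phi> ` X) = 2"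
  shows "feasible V E X"
proof -
  obtain \<phi> where c: "proper_3_coloring V E \<phi>" and k: "card (\<phi> ` X) = 2"
    using assms(5) by blast
  have "\<not> connected_by_chain_of_diamonds V E X"
  proof
    assume "connected_by_chain_of_diamonds V E X"
    then obtain n u v w where h: "diamond_chain_hom V E n u v w" and s: "X \<subseteq> u ` {0..n}"
      unfolding connected_by_chain_of_diamonds_def by blast
    have "\<phi> ` X \<subseteq> {\<phi> (u 0)}"
    proof
      fix y assume "y \<in> \<phi> ` X"
      then obtain x where x: "x \<in> X" "y = \<phi> x" by blast
      then obtain i where "i \<in> {0..n}" "x = u i" using s by blast
      then show "y \<in> {\<phi> (u 0)}" using x chain_same_color[OF h c, of i] by simp
    qed
    hence "card (\<phi> ` X) \<le> 1"
      using card_mono[of "{\<phi> (u 0)}"] by simp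
    with k show False by simp
  qed
  then show ?thesis unfolding feasible_def using assms(3,4) c k by fastforce
qed

end
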